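(* Let $d\ge 1$ and suppose there exists a function $f:\{0,1\}^n\to\{0,1\}$ of degree $d$ with block sensitivity $b$. Then there exist $\tau\in\{0,1\}$ and $p\in\mathbb{R}^d$ such that $$\langle p, m_d(1)\rangle = 1,\qquad 0\le \langle p, m_d(k)\rangle \le 1 \ \text{ for each } k\in\{2,\dots,b-1\},\qquad \langle p, m_d(b)\rangle = \tau,$$ where $m_d:\mathbb{R}\to\mathbb{R}^d$ is the moment map $m_d(t)=(t,t^2,\dots,t^d)$ and $\langle\cdot,\cdot\rangle$ is the standard inner product on $\mathbb{R}^d$.
   Context: The degree of $f:\{0,1\}^n\to\{0,1\}$ is the degree of the unique multilinear real polynomial agreeing with $f$ on $\{0,1\}^n$. For $x\in\{0,1\}^n$ and $B\subseteq[n]$, $x^B$ is $x$ with the bits in $B$ flipped. The block sensitivity $\mathrm{bs}(f)$ is the maximum over $x\in\{0,1\}^n$ of the largest number $m$ of pairwise disjoint sets $B_1,\dots,B_m\subseteq[n]$ with $f(x^{B_j})\neq f(x)$ for all $j$. *)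

theory Defs
  imports Main Complex_Main
begin

text \<open>Points of the Boolean cube {0,1}^n are encoded as x :: nat \<Rightarrow> bool with
  x i = True meaning bit i equals 1; only indices i < n are used (coordinates
  indexed by {..<n}). A Boolean function f : {0,1}^n \<rightarrow> {0,1} is encoded as
  f :: (nat \<Rightarrow> bool) \<Rightarrow> bool (True = 1); only its values on the cube matter.\<close>

definition cube :: "nat \<Rightarrow> (nat \<Rightarrow> bool) set" where
  "cube n = {x. \<forall>i. n \<le> i \<longrightarrow> \<not> x i}"

definition flip :: "(nat \<Rightarrow> bool) \<Rightarrow> nat set \<Rightarrow> (nat \<Rightarrow> bool)" where
  "flip x B = (\<lambda>i. if i \<in> B then \<not> x i else x i)"

definition multilin_rep :: "nat \<Rightarrow> ((nat \<Rightarrow> bool) \<Rightarrow> bool) \<Rightarrow> (nat set \<Rightarrow> real) \<Rightarrow> bool" where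
  "multilin_rep n f c \<longleftrightarrow>
     (\<forall>S. c S \<noteq> 0 \<longrightarrow> S \<subseteq> {..<n}) \<and>
     (\<forall>x \<in> cube n. of_bool (f x) =
        (\<Sum>S \<in> Pow {..<n}. c S * (\<Prod>i\<in>S. of_bool (x i))))"

definition has_degree :: "nat \<Rightarrow> ((nat \<Rightarrow> bool) \<Rightarrow> bool) \<Rightarrow> nat \<Rightarrow> bool" where
  "has_degree n f d \<longleftrightarrow>
     (\<exists>c. multilin_rep n f c \<and> (\<forall>S. c S \<noteq> 0 \<longrightarrow> card S \<le> d) \<and>
          (\<exists>S. c S \<noteq> 0 \<and> card S = d))"

definition sens_blocks :: "nat \<Rightarrow> ((nat \<Rightarrow> bool) \<Rightarrow> bool) \<Rightarrow> (nat \<Rightarrow> bool) \<Rightarrow> nat \<Rightarrow> bool" where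
  "sens_blocks n f x m \<longleftrightarrow>
     (\<exists>B :: nat \<Rightarrow> nat set.
        (\<forall>j<m. B j \<subseteq> {..<n} \<and> f (flip x (B j)) \<noteq> f x) \<and>
        (\<forall>j<m. \<forall>k<m. j \<noteq> k \<longrightarrow> B j \<inter> B k = {}))"

definition bs :: "nat \<Rightarrow> ((nat \<Rightarrow> bool) \<Rightarrow> bool) \<Rightarrow> nat" where
  "bs n f = Max {m. \<exists>x \<in> cube n. sens_blocks n f x m}"

text \<open>\<langle>p, m_d(t)\<rangle> with p \<in> \<real>^d encoded as p :: nat \<Rightarrow> real on indices 1..d.\<close>
definition moment_ip :: "nat \<Rightarrow> (nat \<Rightarrow> real) \<Rightarrow> real \<Rightarrow> real" where
  "moment_ip d p t = (\<Sum>i=1..d. p i * t ^ i)"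

end

theory Submission
  imports Defs "HOL-Computational_Algebra.Polynomial"
begin

definition Asum :: "nat \<Rightarrow> nat \<Rightarrow> (nat set \<Rightarrow> real) \<Rightarrow> real" where
  "Asum b k g = (\<Sum>T\<in>{T. T \<subseteq> {..<b} \<and> card T = k}. g T)"

definition good :: "nat \<Rightarrow> nat \<Rightarrow> (nat set \<Rightarrow> real) \<Rightarrow> bool" where
  "good b d g \<longleftrightarrow> (\<exists>P. degree P \<le> d \<and>
     (\<forall>k\<le>b. Asum b k g = real (b choose k) * poly P (real k)))"

lemma fin_fam: "finite {T. T \<subseteq> {..<b::nat} \<and> card T = k}"
  by (rule finite_subset[of _ "Pow {..<b}"]) auto

lemma good_cong:
  assumes "good b d g" "\<And>T. T \<subseteq> {..<b} \<Longrightarrow> g T = h T"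
  shows "good b d h"
proof -
  have "Asum b k g = Asum b k h" for k
    unfolding Asum_def using assms(2) by (intro sum.cong) auto
  then show ?thesis using assms(1) unfolding good_def by metis
qed

lemma good_zero: "good b d (\<lambda>T. 0)"
  unfolding good_def Asum_def by (rule exI[of _ 0]) auto

lemma good_add:
  assumes "good b d g" "good b d h"
  shows "good b d (\<lambda>T. g T + h T)"
proof -
  obtain P where P: "degree P \<le> d" "\<forall>k\<le>b. Asum b k g = real (b choose k) * poly P (real k)"
    using assms(1) unfolding good_def by blast
  obtain Q where Q: "degree Q \<le> d" "\<forall>k\<le>b. Asum b k h = real (b choose k) * poly Q (real k)"
    using assms(2) unfolding good_def by blast
  show ?thesis unfolding good_def
  proof (intro exI[of _ "P + Q"] conjI allI impI)
    show "degree (P + Q) \<le> d" using P Q degree_add_le by blast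
    fix k assume "k \<le> b"
    then show "Asum b k (\<lambda>T. g T + h T) = real (b choose k) * poly (P + Q) (real k)"
      using P Q by (simp add: Asum_def sum.distrib distrib_left)
  qed
qed

lemma good_smult:
  assumes "good b d g"
  shows "good b d (\<lambda>T. c * g T)"
proof -
  obtain P where P: "degree P \<le> d" "\<forall>k\<le>b. Asum b k g = real (b choose k) * poly P (real k)"
    using assms(1) unfolding good_def by blast
  show ?thesis unfolding good_def
  proof (intro exI[of _ "smult c P"] conjI allI impI)
    show "degree (smult c P) \<le> d" using P by simp
    fix k assume "k \<le> b"
    then show "Asum b k (\<lambda>T. c * g T) = real (b choose k) * poly (smult c P) (real k)"
      using P by (simp add: Asum_def sum_distrib_left[symmetric])
  qed
qed

lemma good_sum:
  assumes "finite I" "\<And>s. s \<in> I \<Longrightarrow> good b d (h s)"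
  shows "good b d (\<lambda>T. \<Sum>s\<in>I. h s T)"
  using assms
proof (induction I rule: finite_induct)
  case empty then show ?case using good_zero by simp
next
  case (insert x F)
  then show ?case using good_add[of b d "h x" "\<lambda>T. \<Sum>s\<in>F. h s T"] by simp
qed

lemma count_sup:
  assumes "finite A" "W \<subseteq> A" "card W \<le> k"
  shows "card {T. T \<subseteq> A \<and> card T = k \<and> W \<subseteq> T} = (card A - card W) choose (k - card W)"
proof -
  have fW: "finite W" using assms finite_subset by blast
  have eq: "{T. T \<subseteq> A \<and> card T = k \<and> W \<subseteq> T} = (\<lambda>T'. T' \<union> W) ` {T'. T' \<subseteq> A - W \<and> card T' = k - card W}"
  proof (intro equalityI subsetI)
    fix T assume T: "T \<in> {T. T \<subseteq> A \<and> card T = k \<and> W \<subseteq> T}"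
    have fT: "finite T" using T assms(1) finite_subset by blast
    have "card (T - W) = k - card W" using T fW by (simp add: card_Diff_subset)
    moreover have "T = (T - W) \<union> W" using T by blast
    ultimately show "T \<in> (\<lambda>T'. T' \<union> W) ` {T'. T' \<subseteq> A - W \<and> card T' = k - card W}"
      using T by blast
  next
    fix T assume "T \<in> (\<lambda>T'. T' \<union> W) ` {T'. T' \<subseteq> A - W \<and> card T' = k - card W}"
    then obtain T' where T': "T = T' \<union> W" "T' \<subseteq> A - W" "card T' = k - card W" by blast
    have fT': "finite T'" using T' assms(1) finite_subset by (metis finite_Diff)
    have "card T = card T' + card W" using T' fT' fW by (simp add: card_Un_disjoint inf_commute Int_Diff)
      (metis Diff_disjoint card_Un_disjoint disjoint_iff subset_iff)
    then show "T \<in> {T. T \<subseteq> A \<and> card T = k \<and> W \<subseteq> T}" using T' assms by auto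
  qed
  have inj: "inj_on (\<lambda>T'. T' \<union> W) {T'. T' \<subseteq> A - W \<and> card T' = k - card W}"
    by (rule inj_onI) blast
  show ?thesis unfolding eq card_image[OF inj]
    using n_subsets[of "A - W" "k - card W"] assms fW by (simp add: card_Diff_subset)
qed

lemma gchoose_poly:
  "\<exists>P. degree P \<le> u \<and> (\<forall>x::real. poly P x = x gchoose u)"
proof -
  define P where "P = smult (1 / fact u) (\<Prod>i\<in>{0..<u}. [:- of_nat i, 1:] :: real poly)"
  have "degree (\<Prod>i\<in>{0..<u}. [:- of_nat i, 1:] :: real poly) \<le> sum (degree \<circ> (\<lambda>i. [:- of_nat i, 1:] :: real poly)) {0..<u}"
    by (rule degree_prod_sum_le) simp
  also have "\<dots> = u" by simp
  finally have "degree P \<le> u" unfolding P_def by simp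
  moreover have "poly P x = x gchoose u" for x :: real
    unfolding P_def gbinomial_prod_rev by (simp add: poly_prod)
  ultimately show ?thesis by blast
qed

lemma good_subset:
  assumes "finite W" "card W \<le> d"
  shows "good b d (\<lambda>T. of_bool (W \<subseteq> T))"
proof (cases "W \<subseteq> {..<b}")
  case False
  have "good b d (\<lambda>T. 0)" by (rule good_zero)
  then show ?thesis by (rule good_cong) (use False in auto)
next
  case True
  define u where "u = card W"
  have ub: "u \<le> b" unfolding u_def using card_mono[OF finite_lessThan True] by simp
  obtain Q where Q: "degree Q \<le> u" "\<And>x::real. poly Q x = x gchoose u"
    using gchoose_poly by blast
  define P where "P = smult (1 / real (b choose u)) Q"
  have bpos: "real (b choose u) > 0" using ub by simp
  show ?thesis unfolding good_def
  proof (intro exI[of _ P] conjI allI impI)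
    show "degree P \<le> d" unfolding P_def using Q assms u_def by simp
    fix k assume kb: "k \<le> b"
    have "Asum b k (\<lambda>T. of_bool (W \<subseteq> T)) = real (card {T. T \<subseteq> {..<b} \<and> card T = k \<and> W \<subseteq> T})"
    proof -
      have "{T. T \<subseteq> {..<b} \<and> card T = k} \<inter> {T. W \<subseteq> T} = {T. T \<subseteq> {..<b} \<and> card T = k \<and> W \<subseteq> T}"
        by blast
      then show ?thesis unfolding Asum_def using fin_fam[of b k] by (simp only: sum_of_bool_eq)
    qed
    also have "\<dots> = real (b choose k) * poly P (real k)"
    proof (cases "u \<le> k")
      case True
      have c: "card {T. T \<subseteq> {..<b} \<and> card T = k \<and> W \<subseteq> T} = (b - u) choose (k - u)"
        using count_sup[of "{..<b}" W k] \<open>W \<subseteq> {..<b}\<close> True u_def by simp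
      have "(b choose k) * (k choose u) = (b choose u) * ((b - u) choose (k - u))"
        using choose_mult[OF True kb] .
      then have "real (b choose k) * real (k choose u) = real (b choose u) * real ((b - u) choose (k - u))"
        by (metis of_nat_mult)
      moreover have "poly P (real k) = real (k choose u) / real (b choose u)"
        unfolding P_def using Q(2) by (simp add: binomial_gbinomial)
      ultimately have "real (b choose k) * poly P (real k) = real (b choose u) * real ((b - u) choose (k - u)) / real (b choose u)"
        by (metis times_divide_eq_right)
      then show ?thesis unfolding c using bpos by simp
    next
      case False
      have "{T. T \<subseteq> {..<b} \<and> card T = k \<and> W \<subseteq> T} = {}"
        using False u_def card_mono[of _ W] finite_subset[of _ "{..<b}"] by (metis (mono_tags, lifting) empty_Collect_eq finite_lessThan)
      moreover have "poly P (real k) = 0"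
        unfolding P_def using Q(2) False by (simp add: binomial_gbinomial[symmetric])
      ultimately show ?thesis by simp
    qed
    finally show "Asum b k (\<lambda>T. of_bool (W \<subseteq> T)) = real (b choose k) * poly P (real k)" .
  qed
qed



lemma prod_of_bool_real: "finite V \<Longrightarrow> (\<Prod>i\<in>V. of_bool (P i) :: real) = of_bool (\<forall>i\<in>V. P i)"
  by (induction V rule: finite_induct) auto

lemma sens_le:
  assumes "sens_blocks n f x m" shows "m \<le> n"
proof -
  obtain B where B: "\<forall>j<m. B j \<subseteq> {..<n} \<and> f (flip x (B j)) \<noteq> f x"
    "\<forall>j<m. \<forall>k<m. j \<noteq> k \<longrightarrow> B j \<inter> B k = {}"
    using assms unfolding sens_blocks_def by blast
  have ne: "B j \<noteq> {}" if "j < m" for j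
  proof
    assume "B j = {}"
    then have "flip x (B j) = x" unfolding flip_def by auto
    moreover have "f (flip x (B j)) \<noteq> f x" using B(1) that by blast
    ultimately show False by simp
  qed
  define h where "h j = (SOME i. i \<in> B j)" for j
  have hB: "h j \<in> B j" if "j < m" for j
    unfolding h_def using ne[OF that] by (simp add: some_in_eq)
  have "inj_on h {..<m}"
  proof (rule inj_onI)
    fix j k assume "j \<in> {..<m}" "k \<in> {..<m}" "h j = h k"
    then show "j = k" using hB[of j] hB[of k] B(2) by auto
  qed
  moreover have "h ` {..<m} \<subseteq> {..<n}" using hB B(1) by auto
  ultimately have "card {..<m} \<le> card {..<n}" using card_inj_on_le by blast
  then show ?thesis by simp
qed

lemma flip_cube: "x \<in> cube n \<Longrightarrow> U \<subseteq> {..<n} \<Longrightarrow> flip x U \<in> cube n"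
  unfolding cube_def flip_def by auto

lemma good_F:
  assumes rep: "multilin_rep n f c" and deg: "\<forall>S. c S \<noteq> 0 \<longrightarrow> card S \<le> d"
    and x: "x \<in> cube n" and Bs: "\<forall>j<b. B j \<subseteq> {..<n}"
    and dis: "\<forall>j<b. \<forall>k<b. j \<noteq> k \<longrightarrow> B j \<inter> B k = {}"
  shows "good b d (\<lambda>T. of_bool (f (flip x (\<Union>j\<in>T. B j))))"
proof -
  define inb where "inb i = (\<exists>j<b. i \<in> B j)" for i
  define J where "J i = (SOME j. j < b \<and> i \<in> B j)" for i
  define \<alpha> :: "nat \<Rightarrow> real" where "\<alpha> i = of_bool (x i)" for i
  define \<beta> :: "nat \<Rightarrow> real" where "\<beta> i = (if inb i then 1 - 2 * of_bool (x i) else 0)" for i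
  have J: "J i < b \<and> i \<in> B (J i)" if "inb i" for i
  proof -
    have "\<exists>j. j < b \<and> i \<in> B j" using that unfolding inb_def by blast
    then show ?thesis unfolding J_def by (rule someI_ex)
  qed
  have bit: "of_bool (flip x (\<Union>j\<in>T. B j) i) = \<beta> i * of_bool (J i \<in> T) + \<alpha> i"
    if T: "T \<subseteq> {..<b}" for T i
  proof (cases "inb i")
    case True
    have "(i \<in> (\<Union>j\<in>T. B j)) = (J i \<in> T)"
    proof
      assume "i \<in> (\<Union>j\<in>T. B j)"
      then obtain j where j: "j \<in> T" "i \<in> B j" by blast
      have jb: "j < b" using j T by auto
      show "J i \<in> T"
      proof (rule ccontr)
        assume "J i \<notin> T"
        then have "j \<noteq> J i" using j by auto
        then have "B j \<inter> B (J i) = {}" using dis jb J[OF True] by blast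
        then show False using j J[OF True] by blast
      qed
    next
      assume "J i \<in> T" then show "i \<in> (\<Union>j\<in>T. B j)" using J[OF True] by blast
    qed
    then show ?thesis unfolding flip_def \<alpha>_def \<beta>_def using True by auto
  next
    case False
    then have "i \<notin> (\<Union>j\<in>T. B j)" using T unfolding inb_def by blast
    then show ?thesis unfolding flip_def \<alpha>_def \<beta>_def using False by auto
  qed
  define coef where "coef S V = c S * (\<Prod>i\<in>V. \<beta> i) * (\<Prod>i\<in>S - V. \<alpha> i)" for S V
  have eq: "of_bool (f (flip x (\<Union>j\<in>T. B j))) =
     (\<Sum>S\<in>Pow {..<n}. \<Sum>V\<in>Pow S. coef S V * of_bool (J ` V \<subseteq> T))"
    if T: "T \<subseteq> {..<b}" for T
  proof -
    have U: "(\<Union>j\<in>T. B j) \<subseteq> {..<n}" using T Bs by blast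
    have "of_bool (f (flip x (\<Union>j\<in>T. B j))) = (\<Sum>S\<in>Pow {..<n}. c S * (\<Prod>i\<in>S. of_bool (flip x (\<Union>j\<in>T. B j) i)))"
      using rep flip_cube[OF x U] unfolding multilin_rep_def by blast
    also have "\<dots> = (\<Sum>S\<in>Pow {..<n}. \<Sum>V\<in>Pow S. coef S V * of_bool (J ` V \<subseteq> T))"
    proof (rule sum.cong[OF refl])
      fix S assume S: "S \<in> Pow {..<n}"
      have fS: "finite S" using S finite_subset by blast
      have "(\<Prod>i\<in>S. of_bool (flip x (\<Union>j\<in>T. B j) i) :: real) = (\<Prod>i\<in>S. \<beta> i * of_bool (J i \<in> T) + \<alpha> i)"
        using bit[OF T] by simp
      also have "\<dots> = (\<Sum>V\<in>Pow S. (\<Prod>i\<in>V. \<beta> i * of_bool (J i \<in> T)) * (\<Prod>i\<in>S - V. \<alpha> i))"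
        by (rule prod_add[OF fS])
      also have "\<dots> = (\<Sum>V\<in>Pow S. (\<Prod>i\<in>V. \<beta> i) * of_bool (J ` V \<subseteq> T) * (\<Prod>i\<in>S - V. \<alpha> i))"
      proof (rule sum.cong[OF refl])
        fix V assume "V \<in> Pow S"
        then have fV: "finite V" using fS finite_subset by blast
        show "(\<Prod>i\<in>V. \<beta> i * of_bool (J i \<in> T)) * (\<Prod>i\<in>S - V. \<alpha> i) = (\<Prod>i\<in>V. \<beta> i) * of_bool (J ` V \<subseteq> T) * (\<Prod>i\<in>S - V. \<alpha> i)"
          using prod_of_bool_real[OF fV, of "\<lambda>i. J i \<in> T"] by (simp add: prod.distrib image_subset_iff)
      qed
      finally show "c S * (\<Prod>i\<in>S. of_bool (flip x (\<Union>j\<in>T. B j) i)) = (\<Sum>V\<in>Pow S. coef S V * of_bool (J ` V \<subseteq> T))"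
        unfolding coef_def by (simp add: sum_distrib_left mult_ac)
    qed
    finally show ?thesis .
  qed
  have "good b d (\<lambda>T. \<Sum>S\<in>Pow {..<n}. \<Sum>V\<in>Pow S. coef S V * of_bool (J ` V \<subseteq> T))"
  proof (intro good_sum)
    fix S V assume S: "S \<in> Pow {..<n}" and V: "V \<in> Pow S"
    have fS: "finite S" using S finite_subset by blast
    have fV: "finite V" using V fS finite_subset by blast
    show "good b d (\<lambda>T. coef S V * of_bool (J ` V \<subseteq> T))"
    proof (cases "c S = 0")
      case True
      have "good b d (\<lambda>T. 0)" by (rule good_zero)
      then show ?thesis by (rule good_cong) (simp add: coef_def True)
    next
      case False
      have "card (J ` V) \<le> card V" using fV card_image_le by blast
      also have "\<dots> \<le> card S" using V fS card_mono by blast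
      also have "\<dots> \<le> d" using deg False by blast
      finally show ?thesis using good_smult good_subset fV by blast
    qed
  qed (auto intro: finite_subset)
  then show ?thesis by (rule good_cong) (simp add: eq)
qed

lemma moment_poly:
  fixes P :: "real poly"
  assumes "degree P \<le> d"
  shows "moment_ip d (\<lambda>i. s * coeff P i) t = s * (poly P t - poly P 0)"
proof -
  have "poly P t = (\<Sum>i\<le>degree P. coeff P i * t ^ i)" by (rule poly_altdef)
  also have "\<dots> = (\<Sum>i\<le>d. coeff P i * t ^ i)"
    by (rule sum.mono_neutral_left) (use assms in \<open>auto simp: coeff_eq_0\<close>)
  also have "\<dots> = coeff P 0 + (\<Sum>i=1..d. coeff P i * t ^ i)"
  proof -
    have "{..d} = insert 0 {1..d}" by auto
    then show ?thesis by simp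
  qed
  finally have "(\<Sum>i=1..d. coeff P i * t ^ i) = poly P t - poly P 0"
    by (simp add: poly_0_coeff_0)
  then show ?thesis unfolding moment_ip_def
    by (simp add: sum_distrib_left[symmetric] mult.assoc)
qed

lemma Asum_bounds:
  assumes "\<And>T. 0 \<le> g T" "\<And>T. g T \<le> 1"
  shows "0 \<le> Asum b k g \<and> Asum b k g \<le> real (b choose k)"
proof
  show "0 \<le> Asum b k g" unfolding Asum_def using assms by (simp add: sum_nonneg)
  have "Asum b k g \<le> (\<Sum>T\<in>{T. T \<subseteq> {..<b} \<and> card T = k}. 1)"
    unfolding Asum_def using assms by (intro sum_mono) auto
  also have "\<dots> = real (b choose k)" using n_subsets[of "{..<b}" k] by simp
  finally show "Asum b k g \<le> real (b choose k)" .
qed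

theorem proposition9:
  fixes n d b :: nat and f :: "(nat \<Rightarrow> bool) \<Rightarrow> bool"
  assumes "d \<ge> 1"
    and "has_degree n f d"
    and "bs n f = b"
  shows "\<exists>(\<tau>::real) (p::nat \<Rightarrow> real). (\<tau> = 0 \<or> \<tau> = 1) \<and>
           moment_ip d p 1 = 1 \<and>
           (\<forall>k \<in> {2..b-1}. 0 \<le> moment_ip d p (real k) \<and> moment_ip d p (real k) \<le> 1) \<and>
           moment_ip d p (real b) = \<tau>"
proof (cases "b = 0")
  case True
  define p :: "nat \<Rightarrow> real" where "p i = (if i = 1 then 1 else 0)" for i
  have "moment_ip d p 1 = 1" using assms(1) unfolding moment_ip_def p_def
    by (simp add: sum.delta)
  moreover have "moment_ip d p 0 = 0" unfolding moment_ip_def by simp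
  ultimately show ?thesis using True by (intro exI[of _ 0] exI[of _ p]) auto
next
  case False
  then have b1: "b \<ge> 1" by simp
  obtain c where rep: "multilin_rep n f c" and deg: "\<forall>S. c S \<noteq> 0 \<longrightarrow> card S \<le> d"
    using assms(2) unfolding has_degree_def by blast
  define M where "M = {m. \<exists>x \<in> cube n. sens_blocks n f x m}"
  have finM: "finite M" unfolding M_def
    by (rule finite_subset[of _ "{..n}"]) (auto dest: sens_le)
  have "(\<lambda>_. False) \<in> cube n" unfolding cube_def by simp
  moreover have "sens_blocks n f (\<lambda>_. False) 0" unfolding sens_blocks_def by simp
  ultimately have "0 \<in> M" unfolding M_def by blast
  then have "Max M \<in> M" using finM Max_in by blast
  then have "b \<in> M" using assms(3) unfolding bs_def M_def by simp
  then obtain x B where x: "x \<in> cube n"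
    and B: "\<forall>j<b. B j \<subseteq> {..<n} \<and> f (flip x (B j)) \<noteq> f x"
    and dis: "\<forall>j<b. \<forall>k<b. j \<noteq> k \<longrightarrow> B j \<inter> B k = {}"
    unfolding M_def sens_blocks_def by blast
  define g where "g T = (of_bool (f (flip x (\<Union>j\<in>T. B j))) :: real)" for T
  have "good b d g" unfolding g_def
    by (rule good_F[OF rep deg x]) (use B dis in auto)
  then obtain P where degP: "degree P \<le> d"
    and P: "\<forall>k\<le>b. Asum b k g = real (b choose k) * poly P (real k)"
    unfolding good_def by blast
  define \<phi> :: real where "\<phi> = of_bool (f x)"
  have fam0: "{T. T \<subseteq> {..<b} \<and> card T = 0} = {{}}"
    using finite_subset[of _ "{..<b}"] by auto
  have "Asum b 0 g = g {}" unfolding Asum_def fam0 by simp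
  also have "\<dots> = \<phi>" unfolding g_def \<phi>_def flip_def by simp
  finally have P0: "poly P 0 = \<phi>" using P by simp
  have fam1: "{T. T \<subseteq> {..<b} \<and> card T = 1} = (\<lambda>j. {j}) ` {..<b}"
    by (auto simp: card_Suc_eq)
  have "Asum b 1 g = (\<Sum>j<b. g {j})" unfolding Asum_def fam1
    by (subst sum.reindex) (auto simp: inj_on_def)
  also have "\<dots> = (\<Sum>j<b. 1 - \<phi>)"
  proof (rule sum.cong[OF refl])
    fix j assume "j \<in> {..<b}"
    then have "f (flip x (B j)) \<noteq> f x" using B by auto
    then show "g {j} = 1 - \<phi>" unfolding g_def \<phi>_def by auto
  qed
  finally have "real b * poly P 1 = real b * (1 - \<phi>)" using P b1 by simp
  then have P1: "poly P 1 = 1 - \<phi>" using b1 by simp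
  have famb: "{T. T \<subseteq> {..<b} \<and> card T = b} = {{..<b}}"
    using card_subset_eq[of "{..<b}"] by auto
  have "Asum b b g = real (b choose b) * poly P (real b)" using P by simp
  then have Pb: "poly P (real b) = g {..<b}" unfolding Asum_def famb by simp
  have gb: "g {..<b} = 0 \<or> g {..<b} = 1" unfolding g_def by simp
  have Pk: "0 \<le> poly P (real k) \<and> poly P (real k) \<le> 1" if "k \<le> b" for k
  proof -
    have "0 \<le> Asum b k g \<and> Asum b k g \<le> real (b choose k)"
      by (rule Asum_bounds) (simp_all add: g_def)
    moreover have "real (b choose k) > 0" using that by simp
    ultimately show ?thesis using P that
      by (simp add: zero_le_mult_iff)
  qed
  define s :: real where "s = 1 - 2 * \<phi>"
  define p where "p i = s * coeff P i" for i
  have mp: "moment_ip d p t = s * (poly P t - \<phi>)" for t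
    unfolding p_def using moment_poly[OF degP, of s t] P0 by simp
  have phi: "\<phi> = 0 \<or> \<phi> = 1" unfolding \<phi>_def by simp
  show ?thesis
  proof (intro exI[of _ "s * (poly P (real b) - \<phi>)"] exI[of _ p] conjI ballI)
    show "s * (poly P (real b) - \<phi>) = 0 \<or> s * (poly P (real b) - \<phi>) = 1"
      using phi gb Pb unfolding s_def by auto
    show "moment_ip d p 1 = 1" unfolding mp P1 s_def using phi by auto
    fix k assume "k \<in> {2..b-1}"
    then have "k \<le> b" by auto
    then show "0 \<le> moment_ip d p (real k)" "moment_ip d p (real k) \<le> 1"
      unfolding mp s_def using phi Pk by auto
  qed (simp add: mp)
qed

end
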